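(* In the setting described in the context, suppose there exist $\hat{i}\in I$ and $j\in J_{\hat{i}}$ with $\hat{x}_j\neq0$. Then RLO-IU-SD is feasible if and only if $\sum_{j\in J}a_{ij}\hat{x}_j\ge b_i$ for all $i\in I$.
   Context: Let $I=\{1,\dots,m\}$, $J=\{1,\dots,n\}$. Given are $a_{ij}\in\mathbb{R}$, $b\in\mathbb{R}^m$, nonempty index sets $J_i\subseteq J$ ($i\in I$), an observed point $\hat{x}\in\mathbb{R}^n$, prior vectors $\hat{\alpha}_i\in\mathbb{R}^{|J_i|}$, real weights $\xi_i$ ($i\in I$), and a norm $\|\cdot\|$. The problem RLO-IU-SD is \[ \min_{\alpha,c,u,\pi,\lambda,\mu}\ \sum_{i\in I}\xi_i\|\alpha_i-\hat{\alpha}_i\| \] subject to: $\sum_{j\in J}c_j\hat{x}_j-\sum_{i\in I}b_i\pi_i=0$; $\alpha_{ij}\hat{x}_j+u_{ij}\ge0$ and $-\alpha_{ij}\hat{x}_j+u_{ij}\ge0$ for all $j\in J_i,i\in I$; $\sum_{j\in J}a_{ij}\hat{x}_j-\sum_{j\in J_i}u_{ij}\ge b_i$ for all $i\in I$; $\alpha_{ij}\ge0$ for all $j\in J_i,i\in I$; $\sum_{i\in I}\pi_i=1$; $\sum_{i\in I}a_{ij}\pi_i+\sum_{i\in I:j\in J_i}\alpha_{ij}(\lambda_{ij}-\mu_{ij})=c_j$ for all $j\in J$; $\pi_i=\lambda_{ij}+\mu_{ij}$ for all $j\in J_i,i\in I$; $\pi_i,\lambda_{ij},\mu_{ij}\ge0$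 for all $j\in J_i,i\in I$. Here $\alpha_i=(\alpha_{ij})_{j\in J_i}$, $c\in\mathbb{R}^n$, $\pi\in\mathbb{R}^m$. *)

theory Defs
  imports Complex_Main
begin

text \<open>Index sets I = {1..m}, J = {1..n}; vectors indexed by
  nat (only entries with indices in I, J, J_i matter). The objective (weights, prior
  vectors, norm) does not affect feasibility.\<close>

definition rlo_iu_sd_feasible ::
  "nat \<Rightarrow> nat \<Rightarrow> (nat \<Rightarrow> nat \<Rightarrow> real) \<Rightarrow> (nat \<Rightarrow> real) \<Rightarrow> (nat \<Rightarrow> nat set) \<Rightarrow> (nat \<Rightarrow> real) \<Rightarrow> bool"
where
  "rlo_iu_sd_feasible m n a b Js xh \<longleftrightarrow>
    (\<exists>(\<alpha>::nat \<Rightarrow> nat \<Rightarrow> real) (c::nat \<Rightarrow> real) (u::nat \<Rightarrow> nat \<Rightarrow> real)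
       (p::nat \<Rightarrow> real) (lam::nat \<Rightarrow> nat \<Rightarrow> real) (mu::nat \<Rightarrow> nat \<Rightarrow> real).
      (\<Sum>j\<in>{1..n}. c j * xh j) - (\<Sum>i\<in>{1..m}. b i * p i) = 0 \<and>
      (\<forall>i\<in>{1..m}. \<forall>j\<in>Js i. \<alpha> i j * xh j + u i j \<ge> 0 \<and> - \<alpha> i j * xh j + u i j \<ge> 0) \<and>
      (\<forall>i\<in>{1..m}. (\<Sum>j\<in>{1..n}. a i j * xh j) - (\<Sum>j\<in>Js i. u i j) \<ge> b i) \<and>
      (\<forall>i\<in>{1..m}. \<forall>j\<in>Js i. \<alpha> i j \<ge> 0) \<and>
      (\<Sum>i\<in>{1..m}. p i) = 1 \<and>
      (\<forall>j\<in>{1..n}. (\<Sum>i\<in>{1..m}. a i j * p i)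
                     + (\<Sum>i\<in>{i\<in>{1..m}. j \<in> Js i}. \<alpha> i j * (lam i j - mu i j)) = c j) \<and>
      (\<forall>i\<in>{1..m}. \<forall>j\<in>Js i. p i = lam i j + mu i j) \<and>
      (\<forall>i\<in>{1..m}. p i \<ge> 0) \<and>
      (\<forall>i\<in>{1..m}. \<forall>j\<in>Js i. lam i j \<ge> 0 \<and> mu i j \<ge> 0))"

end

theory Submission
  imports Defs
begin

theorem proposition3:
  fixes m n :: nat and a :: "nat \<Rightarrow> nat \<Rightarrow> real" and b :: "nat \<Rightarrow> real"
    and Js :: "nat \<Rightarrow> nat set" and xh :: "nat \<Rightarrow> real"
  assumes "\<forall>i\<in>{1..m}. Js i \<subseteq> {1..n} \<and> Js i \<noteq> {}"
    and "\<exists>ih\<in>{1..m}. \<exists>j\<in>Js ih. xh j \<noteq> 0"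
  shows "rlo_iu_sd_feasible m n a b Js xh \<longleftrightarrow>
         (\<forall>i\<in>{1..m}. (\<Sum>j\<in>{1..n}. a i j * xh j) \<ge> b i)"
proof
  assume "rlo_iu_sd_feasible m n a b Js xh"
  then obtain \<alpha> u where
    h1: "\<forall>i\<in>{1..m}. \<forall>j\<in>Js i. \<alpha> i j * xh j + u i j \<ge> 0 \<and> - \<alpha> i j * xh j + u i j \<ge> 0"
    and h2: "\<forall>i\<in>{1..m}. (\<Sum>j\<in>{1..n}. a i j * xh j) - (\<Sum>j\<in>Js i. u i j) \<ge> b i"
    unfolding rlo_iu_sd_feasible_def by blast
  show "\<forall>i\<in>{1..m}. (\<Sum>j\<in>{1..n}. a i j * xh j) \<ge> b i"
  proof
    fix i assume i: "i \<in> {1..m}"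
    have "\<forall>j\<in>Js i. u i j \<ge> 0" using h1 i by force
    hence "(\<Sum>j\<in>Js i. u i j) \<ge> 0" by (simp add: sum_nonneg)
    thus "(\<Sum>j\<in>{1..n}. a i j * xh j) \<ge> b i" using h2 i by force
  qed
next
  assume H: "\<forall>i\<in>{1..m}. (\<Sum>j\<in>{1..n}. a i j * xh j) \<ge> b i"
  obtain ih j0 where ih: "ih \<in> {1..m}" and j0: "j0 \<in> Js ih" and x0: "xh j0 \<noteq> 0"
    using assms(2) by blast
  have j0n: "j0 \<in> {1..n}" using assms(1) ih j0 by blast
  define s where "s = (\<Sum>j\<in>{1..n}. a ih j * xh j) - b ih"
  have s0: "s \<ge> 0" using H ih s_def by force
  define \<alpha> where "\<alpha> = (\<lambda>i j. if i = ih \<and> j = j0 then s / \<bar>xh j0\<bar> else (0::real))"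
  define u where "u = (\<lambda>i j. if i = ih \<and> j = j0 then s else (0::real))"
  define p where "p = (\<lambda>i. if i = ih then 1 else (0::real))"
  define lam where "lam = (\<lambda>i j. if i = ih then (if j = j0 \<and> xh j0 > 0 then 0 else 1) else (0::real))"
  define mu where "mu = (\<lambda>i j. if i = ih then (if j = j0 \<and> xh j0 > 0 then 1 else 0) else (0::real))"
  define c where "c = (\<lambda>j. (\<Sum>i\<in>{1..m}. a i j * p i)
                     + (\<Sum>i\<in>{i\<in>{1..m}. j \<in> Js i}. \<alpha> i j * (lam i j - mu i j)))"
  have sp: "\<And>f. (\<Sum>i\<in>{1..m}. f i * p i) = f ih"
    using ih by (simp add: p_def if_distrib sum.If_cases cong: if_cong)
  have inner: "\<And>j. (\<Sum>i\<in>{i\<in>{1..m}. j \<in> Js i}. \<alpha> i j * (lam i j - mu i j))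
      = (if j = j0 then \<alpha> ih j0 * (lam ih j0 - mu ih j0) else 0)"
  proof -
    fix j
    have "(\<Sum>i\<in>{i\<in>{1..m}. j \<in> Js i}. \<alpha> i j * (lam i j - mu i j))
        = (\<Sum>i\<in>{i\<in>{1..m}. j \<in> Js i}. if i = ih \<and> j = j0 then \<alpha> ih j0 * (lam ih j0 - mu ih j0) else 0)"
      by (rule sum.cong) (auto simp: \<alpha>_def)
    also have "\<dots> = (if j = j0 then \<alpha> ih j0 * (lam ih j0 - mu ih j0) else 0)"
      using ih j0 by (cases "j = j0") (auto simp: sum.delta)
    finally show "?thesis j" .
  qed
  have val: "\<alpha> ih j0 * (lam ih j0 - mu ih j0) * xh j0 = - s"
    using x0 by (auto simp: \<alpha>_def lam_def mu_def field_simps abs_if)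
  have "(\<Sum>j\<in>{1..n}. c j * xh j) = (\<Sum>j\<in>{1..n}. a ih j * xh j
        + (if j = j0 then \<alpha> ih j0 * (lam ih j0 - mu ih j0) * xh j0 else 0))"
  proof (rule sum.cong)
    fix j
    have "c j = a ih j + (if j = j0 then \<alpha> ih j0 * (lam ih j0 - mu ih j0) else 0)"
      unfolding c_def by (simp only: sp inner)
    thus "c j * xh j = a ih j * xh j
        + (if j = j0 then \<alpha> ih j0 * (lam ih j0 - mu ih j0) * xh j0 else 0)"
      by (simp add: algebra_simps)
  qed simp
  also have "\<dots> = (\<Sum>j\<in>{1..n}. a ih j * xh j) - s"
    using j0n val by (simp add: sum.distrib)
  also have "\<dots> = b ih" using s_def by simp
  finally have cx: "(\<Sum>j\<in>{1..n}. c j * xh j) = b ih" .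
  have bp: "(\<Sum>i\<in>{1..m}. b i * p i) = b ih" by (rule sp)
  have usum: "\<forall>i\<in>{1..m}. (\<Sum>j\<in>Js i. u i j) = (if i = ih then s else 0)"
  proof
    fix i assume "i \<in> {1..m}"
    have fin: "finite (Js i)" using assms(1) \<open>i \<in> {1..m}\<close> finite_subset by blast
    show "(\<Sum>j\<in>Js i. u i j) = (if i = ih then s else 0)"
      using fin j0 by (auto simp: u_def sum.delta)
  qed
  show "rlo_iu_sd_feasible m n a b Js xh"
    unfolding rlo_iu_sd_feasible_def
  apply (rule exI[of _ \<alpha>], rule exI[of _ c], rule exI[of _ u], rule exI[of _ p], rule exI[of _ lam], rule exI[of _ mu])
  proof (intro conjI)
    show "(\<Sum>j\<in>{1..n}. c j * xh j) - (\<Sum>i\<in>{1..m}. b i * p i) = 0" using cx bp by simp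
    show "\<forall>i\<in>{1..m}. \<forall>j\<in>Js i. \<alpha> i j * xh j + u i j \<ge> 0 \<and> - \<alpha> i j * xh j + u i j \<ge> 0"
    proof (intro ballI)
      fix i j
      have "\<bar>\<alpha> i j * xh j\<bar> \<le> u i j"
        using x0 s0 by (auto simp: \<alpha>_def u_def abs_mult)
      thus "\<alpha> i j * xh j + u i j \<ge> 0 \<and> - \<alpha> i j * xh j + u i j \<ge> 0" by linarith
    qed
    show "\<forall>i\<in>{1..m}. (\<Sum>j\<in>{1..n}. a i j * xh j) - (\<Sum>j\<in>Js i. u i j) \<ge> b i"
      using usum H s_def by auto
    show "\<forall>i\<in>{1..m}. \<forall>j\<in>Js i. \<alpha> i j \<ge> 0" using s0 by (auto simp: \<alpha>_def)
    show "(\<Sum>i\<in>{1..m}. p i) = 1" using ih by (simp add: p_def)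
    show "\<forall>j\<in>{1..n}. (\<Sum>i\<in>{1..m}. a i j * p i)
                     + (\<Sum>i\<in>{i\<in>{1..m}. j \<in> Js i}. \<alpha> i j * (lam i j - mu i j)) = c j"
      by (simp add: c_def)
    show "\<forall>i\<in>{1..m}. \<forall>j\<in>Js i. p i = lam i j + mu i j" by (auto simp: p_def lam_def mu_def)
    show "\<forall>i\<in>{1..m}. p i \<ge> 0" by (simp add: p_def)
    show "\<forall>i\<in>{1..m}. \<forall>j\<in>Js i. lam i j \<ge> 0 \<and> mu i j \<ge> 0" by (simp add: lam_def mu_def)
  qed
qed

end
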